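(* Let $\{\triangleright\}\subseteq\sigma\subseteq\{\triangleright,\wedge,\mathrm{upd},\sqcup\}$ and let $\mathcal{A}$ be a $\sigma$-algebra that is representable by partial functions and whose atoms are separating. Then $\mathcal{A}$ is the $\sigma$-reduct of a $(\sigma\cup\{;\})$-algebra that is representable by partial functions, whose atoms are separating, and in which composition is completely left-distributive over meets.
   Context: The operations are interpreted on partial functions as: $f \triangleright g = \{(x,y) \in g : x \notin \mathrm{dom}(f)\}$; $f;g=\{(x,z):\exists y\,((x,y)\in f,(y,z)\in g)\}$; $f\wedge g = f\cap g$; $\mathrm{upd}(f,g)(x)$ is $f(x)$ if $f(x)$ defined and $g(x)$ undefined, $g(x)$ if both defined, undefined otherwise; $(f\sqcup g)(x)$ is $f(x)$ if defined, else $g(x)$. An algebra is representable by partial functions if it is isomorphic to an algebra of partial functions (on some base set) with these operations. Define $0 := a\triangleright a$, $a\lhd b := (a\triangleright b)\triangleright b$, $a \le b :\iff a\lhd b = a$. An atom is a minimal nonzero element; atoms are separating if whenever $a\not\le b$ there is an atom $c\le a$ with $c\not\le b$. Composition is completely left-distributive over meets if for every nonempty $S$ with $\bigwedge S$ existing and every $a$, $\bigwedge\{a;s:s\in S\}$ exists and equals $a;\bigwedge S$. *)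

theory Defs
  imports Main
begin

datatype opsym = Pref | Comp | Meet | Upd | Join

text \<open>An algebra: a carrier together with an interpretation of every binary
  operation symbol; only the symbols in the signature under consideration matter.\<close>
record 'a alg =
  carrier :: "'a set"
  op :: "opsym \<Rightarrow> 'a \<Rightarrow> 'a \<Rightarrow> 'a"

definition sig_algebra :: "opsym set \<Rightarrow> 'a alg \<Rightarrow> bool" where
  "sig_algebra \<sigma> A \<longleftrightarrow>
     (\<forall>s\<in>\<sigma>. \<forall>a\<in>carrier A. \<forall>b\<in>carrier A. op A s a b \<in> carrier A)"

definition pf_pref :: "('x \<rightharpoonup> 'x) \<Rightarrow> ('x \<rightharpoonup> 'x) \<Rightarrow> ('x \<rightharpoonup> 'x)" where
  "pf_pref f g = (\<lambda>x. if f x = None then g x else None)"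

definition pf_comp :: "('x \<rightharpoonup> 'x) \<Rightarrow> ('x \<rightharpoonup> 'x) \<Rightarrow> ('x \<rightharpoonup> 'x)" where
  "pf_comp f g = (\<lambda>x. case f x of None \<Rightarrow> None | Some y \<Rightarrow> g y)"

definition pf_meet :: "('x \<rightharpoonup> 'x) \<Rightarrow> ('x \<rightharpoonup> 'x) \<Rightarrow> ('x \<rightharpoonup> 'x)" where
  "pf_meet f g = (\<lambda>x. if f x = g x then f x else None)"

definition pf_upd :: "('x \<rightharpoonup> 'x) \<Rightarrow> ('x \<rightharpoonup> 'x) \<Rightarrow> ('x \<rightharpoonup> 'x)" where
  "pf_upd f g = (\<lambda>x. if f x = None then None else if g x = None then f x else g x)"

definition pf_join :: "('x \<rightharpoonup> 'x) \<Rightarrow> ('x \<rightharpoonup> 'x) \<Rightarrow> ('x \<rightharpoonup> 'x)" where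
  "pf_join f g = (\<lambda>x. case f x of Some y \<Rightarrow> Some y | None \<Rightarrow> g x)"

fun pf_op :: "opsym \<Rightarrow> ('x \<rightharpoonup> 'x) \<Rightarrow> ('x \<rightharpoonup> 'x) \<Rightarrow> ('x \<rightharpoonup> 'x)" where
  "pf_op Pref = pf_pref"
| "pf_op Comp = pf_comp"
| "pf_op Meet = pf_meet"
| "pf_op Upd = pf_upd"
| "pf_op Join = pf_join"

definition representation_over ::
    "opsym set \<Rightarrow> 'a alg \<Rightarrow> 'x set \<Rightarrow> ('a \<Rightarrow> ('x \<rightharpoonup> 'x)) \<Rightarrow> bool" where
  "representation_over \<sigma> A X h \<longleftrightarrow>
     inj_on h (carrier A) \<and>
     (\<forall>a\<in>carrier A. dom (h a) \<subseteq> X \<and> ran (h a) \<subseteq> X) \<and>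
     (\<forall>s\<in>\<sigma>. \<forall>a\<in>carrier A. \<forall>b\<in>carrier A. h (op A s a b) = pf_op s (h a) (h b))"

definition representable_on_type :: "'x itself \<Rightarrow> opsym set \<Rightarrow> 'a alg \<Rightarrow> bool" where
  "representable_on_type T \<sigma> A \<longleftrightarrow>
     sig_algebra \<sigma> A \<and> (\<exists>(X::'x set) h. representation_over \<sigma> A X h)"

definition pref :: "'a alg \<Rightarrow> 'a \<Rightarrow> 'a \<Rightarrow> 'a" where
  "pref A a b = op A Pref a b"

definition zero :: "'a alg \<Rightarrow> 'a" where
  "zero A = (let a = (SOME a. a \<in> carrier A) in pref A a a)"

definition tri :: "'a alg \<Rightarrow> 'a \<Rightarrow> 'a \<Rightarrow> 'a" where
  "tri A a b = pref A (pref A a b) b"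

definition leq :: "'a alg \<Rightarrow> 'a \<Rightarrow> 'a \<Rightarrow> bool" where
  "leq A a b \<longleftrightarrow> tri A a b = a"

definition atom :: "'a alg \<Rightarrow> 'a \<Rightarrow> bool" where
  "atom A c \<longleftrightarrow> c \<in> carrier A \<and> c \<noteq> zero A \<and>
     (\<forall>d\<in>carrier A. leq A d c \<longrightarrow> d = zero A \<or> d = c)"

definition atoms_separating :: "'a alg \<Rightarrow> bool" where
  "atoms_separating A \<longleftrightarrow>
     (\<forall>a\<in>carrier A. \<forall>b\<in>carrier A. \<not> leq A a b \<longrightarrow>
        (\<exists>c. atom A c \<and> leq A c a \<and> \<not> leq A c b))"

definition is_inf :: "'a alg \<Rightarrow> 'a set \<Rightarrow> 'a \<Rightarrow> bool" where
  "is_inf A S m \<longleftrightarrow> m \<in> carrier A \<and> (\<forall>s\<in>S. leq A m s) \<and>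
     (\<forall>m'\<in>carrier A. (\<forall>s\<in>S. leq A m' s) \<longrightarrow> leq A m' m)"

definition comp_completely_left_distributive :: "'a alg \<Rightarrow> bool" where
  "comp_completely_left_distributive A \<longleftrightarrow>
     (\<forall>S m a. S \<noteq> {} \<and> S \<subseteq> carrier A \<and> is_inf A S m \<and> a \<in> carrier A \<longrightarrow>
        is_inf A ((\<lambda>s. op A Comp a s) ` S) (op A Comp a m))"

definition is_reduct :: "opsym set \<Rightarrow> 'a alg \<Rightarrow> 'a alg \<Rightarrow> bool" where
  "is_reduct \<sigma> A B \<longleftrightarrow> carrier A = carrier B \<and>
     (\<forall>s\<in>\<sigma>. \<forall>a\<in>carrier A. \<forall>b\<in>carrier A. op A s a b = op B s a b)"

end

theory Submission
  imports Defs
begin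

lemma pf_op_pointwise:
  assumes "inj g" "s \<noteq> Comp"
    and "f1 p = map_option g (F1 x)" "f2 p = map_option g (F2 x)"
  shows "pf_op s f1 f2 p = map_option g (pf_op s F1 F2 x)"
proof -
  have e: "(map_option g u = map_option g v) = (u = v)" for u v
    using assms(1) by (cases u; cases v) (auto dest: injD)
  show ?thesis using assms(2-4) e
    by (cases s) (auto simp: pf_pref_def pf_meet_def pf_upd_def pf_join_def split: option.splits)
qed

lemma pf_op_none:
  assumes "s \<noteq> Comp" "f1 p = None" "f2 p = None"
  shows "pf_op s f1 f2 p = None"
  using assms by (cases s) (auto simp: pf_pref_def pf_meet_def pf_upd_def pf_join_def)

definition newB :: "'a alg \<Rightarrow> 'a alg" where
  "newB A = A\<lparr>op := (\<lambda>s. if s = Comp then (\<lambda>a b. zero A) else op A s)\<rparr>"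

lemma newB_simps: "carrier (newB A) = carrier A" "op (newB A) Pref = op A Pref"
  "s \<noteq> Comp \<Longrightarrow> op (newB A) s = op A s" "op (newB A) Comp a b = zero A"
  by (auto simp: newB_def)

lemma newB_pref: "pref (newB A) = pref A" by (rule ext)+ (simp add: pref_def newB_simps)
lemma newB_zero: "zero (newB A) = zero A" by (simp add: zero_def newB_pref newB_simps)
lemma newB_leq: "leq (newB A) = leq A" by (rule ext)+ (simp add: leq_def tri_def newB_pref)
lemma newB_atom: "atom (newB A) = atom A" by (rule ext) (simp add: atom_def newB_leq newB_zero newB_simps)
lemma newB_sep: "atoms_separating (newB A) = atoms_separating A"
  by (simp add: atoms_separating_def newB_leq newB_atom newB_simps)

theorem lemma6p2:
  fixes \<sigma> :: "opsym set" and A :: "'a alg"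
  assumes "Pref \<in> \<sigma>" and "\<sigma> \<subseteq> {Pref, Meet, Upd, Join}"
    and "representable_on_type TYPE('b) \<sigma> A"
    and "atoms_separating A"
  shows "\<exists>B :: 'a alg. is_reduct \<sigma> A B \<and>
           representable_on_type TYPE(('a + 'b) \<times> nat) (\<sigma> \<union> {Comp}) B \<and>
           atoms_separating B \<and> comp_completely_left_distributive B"
proof -
  from assms(3) obtain X :: "'b set" and h where sig: "sig_algebra \<sigma> A"
    and rep: "representation_over \<sigma> A X h"
    unfolding representable_on_type_def by blast
  have inj: "inj_on h (carrier A)" and hom: "\<And>s a b. s \<in> \<sigma> \<Longrightarrow> a \<in> carrier A \<Longrightarrow> b \<in> carrier A \<Longrightarrow>
     h (op A s a b) = pf_op s (h a) (h b)"
    using rep unfolding representation_over_def by auto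
  have prefc: "a \<in> carrier A \<Longrightarrow> b \<in> carrier A \<Longrightarrow> op A Pref a b \<in> carrier A" for a b
    using sig assms(1) unfolding sig_algebra_def by blast
  have hpref: "a \<in> carrier A \<Longrightarrow> b \<in> carrier A \<Longrightarrow> h (op A Pref a b) = pf_pref (h a) (h b)" for a b
    using hom[OF assms(1)] by simp
  have zc: "zero A \<in> carrier A \<and> h (zero A) = Map.empty" if "a \<in> carrier A" for a
  proof -
    let ?a = "SOME a. a \<in> carrier A"
    have "?a \<in> carrier A" using that by (rule someI)
    thus ?thesis using prefc hpref unfolding zero_def pref_def Let_def
      by (auto simp: pf_pref_def)
  qed
  have leqaa: "leq A a a" if "a \<in> carrier A" for a
  proof -
    have "h (tri A a a) = h a" unfolding tri_def pref_def
      using that prefc hpref by (auto simp: pf_pref_def)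
    moreover have "tri A a a \<in> carrier A" unfolding tri_def pref_def using that prefc by auto
    ultimately show ?thesis unfolding leq_def using inj that by (auto dest: inj_onD)
  qed
  define B where "B = newB A"
  define g :: "'b \<Rightarrow> ('a + 'b) \<times> nat" where "g = (\<lambda>y. (Inr y, Suc 0))"
  have ginj: "inj g" unfolding g_def by (rule injI) auto
  define h' where "h' = (\<lambda>a (p :: ('a + 'b) \<times> nat). if snd p = 0 then
      (case fst p of Inr x \<Rightarrow> map_option g (h a x) | Inl _ \<Rightarrow> None) else None)"
  have CompN: "Comp \<notin> \<sigma>" using assms(2) by auto
  have red: "is_reduct \<sigma> A B"
    unfolding is_reduct_def B_def using CompN by (auto simp: newB_def)
  have sigB: "sig_algebra (\<sigma> \<union> {Comp}) B"
    using sig zc CompN unfolding sig_algebra_def B_def by (auto simp: newB_def)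
  have injh': "inj_on h' (carrier B)"
  proof (rule inj_onI)
    fix a b assume ab: "a \<in> carrier B" "b \<in> carrier B" "h' a = h' b"
    have "h a = h b"
    proof
      fix x
      have "h' a (Inr x, 0) = h' b (Inr x, 0)" using ab by simp
      hence "map_option g (h a x) = map_option g (h b x)" by (simp add: h'_def)
      thus "h a x = h b x" using ginj
        by (cases "h a x"; cases "h b x") (auto dest: injD)
    qed
    thus "a = b" using inj ab unfolding B_def by (auto simp: newB_simps dest: inj_onD)
  qed
  have homh': "h' (op B s a b) = pf_op s (h' a) (h' b)"
    if s: "s \<in> \<sigma> \<union> {Comp}" and ab: "a \<in> carrier B" "b \<in> carrier B" for s a b
  proof (cases "s = Comp")
    case True
    have "h (zero A) = Map.empty" using zc ab unfolding B_def by (auto simp: newB_simps)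
    hence "h' (zero A) = Map.empty" unfolding h'_def
      by (auto intro!: ext split: sum.splits)
    moreover have "pf_comp (h' a) (h' b) = Map.empty"
      by (rule ext) (auto simp: pf_comp_def h'_def g_def split: option.splits sum.splits)
    ultimately show ?thesis using True by (simp add: B_def newB_simps)
  next
    case False
    hence sg: "s \<in> \<sigma>" using s by auto
    show ?thesis
    proof (rule ext)
      fix p :: "('a + 'b) \<times> nat"
      obtain u n where p: "p = (u, n)" by (cases p)
      show "h' (op B s a b) p = pf_op s (h' a) (h' b) p"
      proof (cases "n = 0")
        case n: True
        show ?thesis
        proof (cases u)
          case (Inl x)
          thus ?thesis using p n False by (auto simp: h'_def intro!: pf_op_none[symmetric])
        next
          case (Inr x)
          have "pf_op s (h' a) (h' b) p = map_option g (pf_op s (h a) (h b) x)"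
            by (rule pf_op_pointwise[OF ginj False]) (simp_all add: h'_def p n Inr)
          moreover have "h' (op B s a b) p = map_option g (h (op A s a b) x)"
            using False by (simp add: h'_def p n Inr B_def newB_simps)
          ultimately show ?thesis using hom[OF sg] ab by (simp add: B_def newB_simps)
        qed
      next
        case n: False
        thus ?thesis using p False by (auto simp: h'_def intro!: pf_op_none[symmetric])
      qed
    qed
  qed
  have repB: "representable_on_type TYPE(('a + 'b) \<times> nat) (\<sigma> \<union> {Comp}) B"
    unfolding representable_on_type_def representation_over_def
    using sigB injh' homh' by blast
  have sepB: "atoms_separating B" using assms(4) by (simp add: B_def newB_sep)
  have cld: "comp_completely_left_distributive B"
    unfolding comp_completely_left_distributive_def
  proof (intro allI impI)
    fix S m a assume H: "S \<noteq> {} \<and> S \<subseteq> carrier B \<and> is_inf B S m \<and> a \<in> carrier B"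
    hence ac: "a \<in> carrier A" by (simp add: B_def newB_simps)
    have img: "(\<lambda>s. op B Comp a s) ` S = {zero A}" using H by (auto simp: B_def newB_simps)
    show "is_inf B ((\<lambda>s. op B Comp a s) ` S) (op B Comp a m)"
      unfolding img is_inf_def using zc[OF ac] leqaa[OF conjunct1[OF zc[OF ac]]]
      by (simp add: B_def newB_simps newB_leq)
  qed
  show ?thesis using red repB sepB cld by blast
qed

end
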